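(* Let $\phi$ be an LTL formula that is satisfiable. Then every finished tableau for $\phi$ is successful, i.e. it has at least one ticked leaf. This holds regardless of the order in which leaves are chosen for extension, regardless of which applicable static rule is used at each step, and regardless of which pivot formula it is applied to.
   Context: LTL formulas over a countable set $AP$ of atoms are built from atoms $p\in AP$ and the constant $\top$ using $\neg\alpha$, $\alpha\wedge\beta$, $X\alpha$ and $\alpha U\beta$. We write $\bot$ for $\neg\top$. A structure is a triple $(S,R,g)$ where $S$ is a finite set, $R\subseteq S\times S$ is serial (every state has an $R$-successor), and $g:S\to 2^{AP}$. A fullpath is a sequence $\sigma=\langle s_0,s_1,\dots\rangle$ with $(s_i,s_{i+1})\in R$ for all $i$. We write $\sigma_i=s_i$ and $\sigma_{\ge j}=\langle s_j,s_{j+1},\dots\rangle$. Truth is defined as follows: - $\sigma\models p$ iff $p\in g(\sigma_0)$; - $\sigma\models\top$ always; - $\neg$ and $\wedge$ are classical; - $\sigma\models X\alpha$ iff $\sigma_{\ge1}\models\alpha$; - $\sigma\models\alpha U\beta$ iff there is $i\ge0$ with $\sigma_{\ge i}\models\beta$ and $\sigma_{\ge j}\models\alpha$ for all $0\le j<i$. A formula is satisfiable iff it is true on some fullpath of some structure. Tableau. A tableau for $\phi$ is a finite rooted tree. Each node $u$ carries a finite set of formulas $\Gamma_u$ (its label), and the root is labelled $\{\phi\}$. We write $u<v$ when $u$ is a proper ancestor of $v$ and $u\le v$ when it is an ancestor or equal. A formula is elementary if it is an atom, a negated atom, or of the form $X\alpha$ or $\neg X\alpha$. A label is poised if it is nonempty,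 contains no pair $\alpha,\neg\alpha$, and all its formulas are elementary. An $X$-eventuality of a poised label is a member of the form $X(\alpha U\beta)$. Static rules are written "parent label / children", where $\{\chi\}\mathbin{\dot\cup}\Delta$ means $\chi\notin\Delta$: - EMPTY: $\{\}$ / tick. - CONTRADICTION: $\{\alpha,\neg\alpha\}\mathbin{\dot\cup}\Delta$ / cross. - $\neg\top$: $\{\neg\top\}\mathbin{\dot\cup}\Delta$ / cross. - $\top$: $\{\top\}\mathbin{\dot\cup}\Delta$ / $\Delta$. - $\wedge$: $\{\alpha\wedge\beta\}\mathbin{\dot\cup}\Delta$ / $\Delta\cup\{\alpha,\beta\}$. - $U$: $\{\alpha U\beta\}\mathbin{\dot\cup}\Delta$ / two children $\Delta\cup\{\beta\}$ and $\Delta\cup\{\alpha,X(\alpha U\beta)\}$. - $\neg\neg$: $\{\neg\neg\alpha\}\mathbin{\dot\cup}\Delta$ / $\Delta\cup\{\alpha\}$. - $\neg\wedge$: $\{\neg(\alpha\wedge\beta)\}\mathbin{\dot\cup}\Delta$ / two children $\Delta\cup\{\neg\alpha\}$ and $\Delta\cup\{\neg\beta\}$. - $\neg U$: $\{\neg(\alpha U\beta)\}\mathbin{\dot\cup}\Delta$ / two children $\Delta\cup\{\neg\alpha,\neg\beta\}$ and $\Delta\cup\{\neg\beta,X\neg(\alpha U\beta)\}$. Non-static rules apply only to a leaf $v$ with poised label. The first applicable one in the following list is used. - LOOP: if some $u<v$ has poised $\Gamma_u\supseteq\Gamma_v$, and for every $X(\alpha U\beta)\in\Gamma_u$ there is $w$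 with $u<w\le v$ and $\beta\in\Gamma_w$, then $v$ is ticked. - PRUNE: if $u<v'<v$ all have the same poised label $\Gamma$, and for every $X(\alpha U\beta)\in\Gamma$, whenever some $x$ with $v'<x\le v$ has $\beta\in\Gamma_x$ there is $y$ with $u<y\le v'$ and $\beta\in\Gamma_y$, then $v$ is crossed. - PRUNE$_0$: if $u<v$ share the same poised label $\Gamma$, $\Gamma$ contains at least one $X$-eventuality, and for no $X(\alpha U\beta)\in\Gamma$ is there $x$ with $u<x\le v$ and $\beta\in\Gamma_x$, then $v$ is crossed. - TRANSITION: otherwise $v$ gets one child labelled $\{\alpha: X\alpha\in\Gamma_v\}\cup\{\neg\alpha:\neg X\alpha\in\Gamma_v\}$. A tableau is constructed from the root by repeatedly choosing any leaf that is neither ticked nor crossed and applying an applicable rule. For non-poised labels this means any applicable static rule to any suitable pivot formula. A tableau is finished if every leaf is ticked or crossed, and successful if some leaf is ticked. *)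

theory Defs
  imports Main "HOL-Library.Countable"
begin

datatype 'a ltl = Atom 'a | Top | Neg "'a ltl" | And "'a ltl" "'a ltl"
  | Nxt "'a ltl" | Until "'a ltl" "'a ltl"

definition suffix :: "nat \<Rightarrow> (nat \<Rightarrow> 's) \<Rightarrow> (nat \<Rightarrow> 's)" where
  "suffix j \<sigma> = (\<lambda>i. \<sigma> (j + i))"

fun sat :: "('s \<Rightarrow> 'a set) \<Rightarrow> (nat \<Rightarrow> 's) \<Rightarrow> 'a ltl \<Rightarrow> bool" where
  "sat g \<sigma> (Atom p) = (p \<in> g (\<sigma> 0))"
| "sat g \<sigma> Top = True"
| "sat g \<sigma> (Neg a) = (\<not> sat g \<sigma> a)"
| "sat g \<sigma> (And a b) = (sat g \<sigma> a \<and> sat g \<sigma> b)"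
| "sat g \<sigma> (Nxt a) = sat g (suffix 1 \<sigma>) a"
| "sat g \<sigma> (Until a b) =
     (\<exists>i. sat g (suffix i \<sigma>) b \<and> (\<forall>j<i. sat g (suffix j \<sigma>) a))"

definition is_structure :: "'s set \<Rightarrow> ('s \<times> 's) set \<Rightarrow> bool" where
  "is_structure S R \<longleftrightarrow> finite S \<and> R \<subseteq> S \<times> S \<and> (\<forall>s\<in>S. \<exists>t. (s, t) \<in> R)"

definition fullpath :: "('s \<times> 's) set \<Rightarrow> (nat \<Rightarrow> 's) \<Rightarrow> bool" where
  "fullpath R \<sigma> \<longleftrightarrow> (\<forall>i. (\<sigma> i, \<sigma> (Suc i)) \<in> R)"

text \<open>States are taken from nat; every finite state set can be encoded this way.\<close>
definition satisfiable :: "'a ltl \<Rightarrow> bool" where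
  "satisfiable \<phi> \<longleftrightarrow> (\<exists>(S::nat set) R g \<sigma>. is_structure S R \<and> fullpath R \<sigma> \<and> sat g \<sigma> \<phi>)"

fun elementary :: "'a ltl \<Rightarrow> bool" where
  "elementary (Atom p) = True"
| "elementary (Neg (Atom p)) = True"
| "elementary (Nxt a) = True"
| "elementary (Neg (Nxt a)) = True"
| "elementary _ = False"

definition poised :: "'a ltl set \<Rightarrow> bool" where
  "poised \<Gamma> \<longleftrightarrow> \<Gamma> \<noteq> {} \<and> \<not> (\<exists>a. a \<in> \<Gamma> \<and> Neg a \<in> \<Gamma>) \<and> (\<forall>f\<in>\<Gamma>. elementary f)"

datatype mark = Tick | Cross

text \<open>Outcome of applying a rule to a leaf: it is ticked/crossed, or gets children
  with the listed labels (child i is node v @ [i]).\<close>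
datatype 'a outcome = Close mark | Kids "'a ltl set list"

definition static_step :: "'a ltl set \<Rightarrow> 'a outcome \<Rightarrow> bool" where
  "static_step \<Gamma> out \<longleftrightarrow>
     (\<Gamma> = {} \<and> out = Close Tick)
   \<or> (\<exists>a. a \<in> \<Gamma> \<and> Neg a \<in> \<Gamma> \<and> out = Close Cross)
   \<or> (Neg Top \<in> \<Gamma> \<and> out = Close Cross)
   \<or> (Top \<in> \<Gamma> \<and> out = Kids [\<Gamma> - {Top}])
   \<or> (\<exists>a b. And a b \<in> \<Gamma> \<and> out = Kids [(\<Gamma> - {And a b}) \<union> {a, b}])
   \<or> (\<exists>a b. Until a b \<in> \<Gamma> \<and>
        out = Kids [(\<Gamma> - {Until a b}) \<union> {b}, (\<Gamma> - {Until a b}) \<union> {a, Nxt (Until a b)}])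
   \<or> (\<exists>a. Neg (Neg a) \<in> \<Gamma> \<and> out = Kids [(\<Gamma> - {Neg (Neg a)}) \<union> {a}])
   \<or> (\<exists>a b. Neg (And a b) \<in> \<Gamma> \<and>
        out = Kids [(\<Gamma> - {Neg (And a b)}) \<union> {Neg a}, (\<Gamma> - {Neg (And a b)}) \<union> {Neg b}])
   \<or> (\<exists>a b. Neg (Until a b) \<in> \<Gamma> \<and>
        out = Kids [(\<Gamma> - {Neg (Until a b)}) \<union> {Neg a, Neg b},
                    (\<Gamma> - {Neg (Until a b)}) \<union> {Neg b, Nxt (Neg (Until a b))}])"

definition anc :: "nat list \<Rightarrow> nat list \<Rightarrow> bool" where
  "anc u v \<longleftrightarrow> (\<exists>w. w \<noteq> [] \<and> v = u @ w)"

definition anc_eq :: "nat list \<Rightarrow> nat list \<Rightarrow> bool" where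
  "anc_eq u v \<longleftrightarrow> (\<exists>w. v = u @ w)"

definition loop_cond :: "(nat list \<Rightarrow> 'a ltl set) \<Rightarrow> nat list \<Rightarrow> bool" where
  "loop_cond lab v \<longleftrightarrow> (\<exists>u. anc u v \<and> poised (lab u) \<and> lab v \<subseteq> lab u \<and>
     (\<forall>a b. Nxt (Until a b) \<in> lab u \<longrightarrow> (\<exists>w. anc u w \<and> anc_eq w v \<and> b \<in> lab w)))"

definition prune_cond :: "(nat list \<Rightarrow> 'a ltl set) \<Rightarrow> nat list \<Rightarrow> bool" where
  "prune_cond lab v \<longleftrightarrow> (\<exists>u v'. anc u v' \<and> anc v' v \<and> lab u = lab v \<and> lab v' = lab v \<and>
     poised (lab v) \<and>
     (\<forall>a b. Nxt (Until a b) \<in> lab v \<longrightarrow>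
        (\<exists>x. anc v' x \<and> anc_eq x v \<and> b \<in> lab x) \<longrightarrow>
        (\<exists>y. anc u y \<and> anc_eq y v' \<and> b \<in> lab y)))"

definition prune0_cond :: "(nat list \<Rightarrow> 'a ltl set) \<Rightarrow> nat list \<Rightarrow> bool" where
  "prune0_cond lab v \<longleftrightarrow> (\<exists>u. anc u v \<and> lab u = lab v \<and> poised (lab v) \<and>
     (\<exists>a b. Nxt (Until a b) \<in> lab v) \<and>
     \<not> (\<exists>a b x. Nxt (Until a b) \<in> lab v \<and> anc u x \<and> anc_eq x v \<and> b \<in> lab x))"

definition transition_label :: "'a ltl set \<Rightarrow> 'a ltl set" where
  "transition_label \<Gamma> = {a. Nxt a \<in> \<Gamma>} \<union> {Neg a | a. Neg (Nxt a) \<in> \<Gamma>}"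

definition nonstatic_step :: "(nat list \<Rightarrow> 'a ltl set) \<Rightarrow> nat list \<Rightarrow> 'a outcome" where
  "nonstatic_step lab v =
     (if loop_cond lab v then Close Tick
      else if prune_cond lab v then Close Cross
      else if prune0_cond lab v then Close Cross
      else Kids [transition_label (lab v)])"

definition leaf :: "nat list set \<Rightarrow> nat list \<Rightarrow> bool" where
  "leaf N v \<longleftrightarrow> v \<in> N \<and> (\<forall>i. v @ [i] \<notin> N)"

definition apply_outcome ::
  "nat list set \<Rightarrow> (nat list \<Rightarrow> 'a ltl set) \<Rightarrow> (nat list \<Rightarrow> mark option) \<Rightarrow> nat list \<Rightarrow> 'a outcome
   \<Rightarrow> nat list set \<times> (nat list \<Rightarrow> 'a ltl set) \<times> (nat list \<Rightarrow> mark option)" where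
  "apply_outcome N lab mk v out = (case out of
      Close m \<Rightarrow> (N, lab, mk(v := Some m))
    | Kids ls \<Rightarrow> (N \<union> {v @ [i] | i. i < length ls},
                 (\<lambda>w. if (\<exists>i<length ls. w = v @ [i]) then ls ! last w else lab w),
                 mk))"

inductive tableau :: "'a ltl \<Rightarrow> nat list set \<Rightarrow> (nat list \<Rightarrow> 'a ltl set) \<Rightarrow> (nat list \<Rightarrow> mark option) \<Rightarrow> bool"
  for \<phi> where
  root: "tableau \<phi> {[]} (\<lambda>_. {\<phi>}) (\<lambda>_. None)"
| step: "tableau \<phi> N lab mk \<Longrightarrow> leaf N v \<Longrightarrow> mk v = None \<Longrightarrow>
         (if poised (lab v) then out = nonstatic_step lab v else static_step (lab v) out) \<Longrightarrow>
         tableau \<phi> (fst (apply_outcome N lab mk v out)) (fst (snd (apply_outcome N lab mk v out)))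
                   (snd (snd (apply_outcome N lab mk v out)))"

definition finished :: "nat list set \<Rightarrow> (nat list \<Rightarrow> mark option) \<Rightarrow> bool" where
  "finished N mk \<longleftrightarrow> (\<forall>v. leaf N v \<longrightarrow> mk v \<noteq> None)"

definition successful :: "nat list set \<Rightarrow> (nat list \<Rightarrow> mark option) \<Rightarrow> bool" where
  "successful N mk \<longleftrightarrow> (\<exists>v. leaf N v \<and> mk v = Some Tick)"

end

theory Submission
  imports Defs "HOL-Library.Infinite_Set"
begin


lemma anc_imp_eq: "anc u v \<Longrightarrow> anc_eq u v" unfolding anc_def anc_eq_def by auto
lemma anc_eq_trans: "anc_eq y z \<Longrightarrow> anc_eq z v \<Longrightarrow> anc_eq y v" unfolding anc_eq_def by auto
lemma anc_eq_refl: "anc_eq v v" unfolding anc_eq_def by auto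

lemma nonstatic_local:
  assumes "\<And>u. anc_eq u v \<Longrightarrow> lab' u = lab u"
  shows "nonstatic_step lab' v = nonstatic_step lab v"
proof -
  have L: "loop_cond lab' v = loop_cond lab v"
    unfolding loop_cond_def
    by (rule ex_cong1, rule conj_cong, simp, simp add: assms anc_imp_eq anc_eq_refl cong: conj_cong)
  have P: "prune_cond lab' v = prune_cond lab v"
    unfolding prune_cond_def
    apply (rule ex_cong1)+
    apply (rule conj_cong, simp)+
    subgoal for u v'
    proof -
      assume h: "anc u v'" "anc v' v"
      have "lab' u = lab u" using h by (meson anc_imp_eq anc_eq_trans assms)
      moreover have "\<And>y. anc_eq y v' \<Longrightarrow> lab' y = lab y" using h by (meson anc_imp_eq anc_eq_trans assms)
      moreover have "\<And>y. anc_eq y v \<Longrightarrow> lab' y = lab y" using assms by blast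
      moreover have "lab' v' = lab v'" "lab' v = lab v" using h by (meson anc_imp_eq anc_eq_refl assms)+
      ultimately show ?thesis by (simp cong: conj_cong)
    qed
    done
  have P0: "prune0_cond lab' v = prune0_cond lab v"
    unfolding prune0_cond_def
    by (rule ex_cong1, rule conj_cong, simp, simp add: assms anc_imp_eq anc_eq_refl cong: conj_cong)
  show ?thesis unfolding nonstatic_step_def using L P P0 assms[of v] by (simp add: anc_eq_refl)
qed

lemma finite_transition_label: "finite \<Gamma> \<Longrightarrow> finite (transition_label \<Gamma>)"
proof -
  assume f: "finite \<Gamma>"
  have "{a. Nxt a \<in> \<Gamma>} \<subseteq> (\<lambda>f. case f of Nxt a \<Rightarrow> a | _ \<Rightarrow> Top) ` \<Gamma>" by force
  moreover have "{Neg a | a. Neg (Nxt a) \<in> \<Gamma>} \<subseteq> (\<lambda>f. case f of Neg (Nxt a) \<Rightarrow> Neg a | _ \<Rightarrow> Top) ` \<Gamma>" by force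
  ultimately show ?thesis unfolding transition_label_def using f by (meson finite_Un finite_imageI finite_subset)
qed

lemma static_kids_finite: "static_step \<Gamma> (Kids ls) \<Longrightarrow> finite \<Gamma> \<Longrightarrow> i < length ls \<Longrightarrow> finite (ls!i)"
  unfolding static_step_def
  apply (elim disjE exE conjE)
  apply (simp_all)
  apply (auto simp: nth_Cons' less_Suc_eq)
  done

lemma nonstatic_kids: "nonstatic_step lab v = Kids ls \<Longrightarrow> ls = [transition_label (lab v)]"
  unfolding nonstatic_step_def by (auto split: if_splits)

definition TI where "TI \<phi> N lab mk \<longleftrightarrow>
 [] \<in> N \<and> lab [] = {\<phi>} \<and> finite N \<and>
 (\<forall>v i. v@[i] \<in> N \<longrightarrow> v \<in> N) \<and>
 (\<forall>v\<in>N. finite (lab v)) \<and>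
 (\<forall>v\<in>N. (\<exists>i. v@[i] \<in> N) \<longrightarrow> mk v = None \<and> (\<exists>ls. (if poised (lab v) then nonstatic_step lab v = Kids ls else static_step (lab v) (Kids ls)) \<and> (\<forall>i. v@[i]\<in>N \<longleftrightarrow> i<length ls) \<and> (\<forall>i<length ls. lab (v@[i]) = ls!i))) \<and>
 (\<forall>v m. mk v = Some m \<longrightarrow> v \<in> N \<and> (\<forall>i. v@[i]\<notin>N) \<and> (if poised (lab v) then nonstatic_step lab v = Close m else static_step (lab v) (Close m)))"

lemma prefix_in: "TI \<phi> N lab mk \<Longrightarrow> anc_eq u v \<Longrightarrow> v \<in> N \<Longrightarrow> u \<in> N"
proof -
  assume T: "TI \<phi> N lab mk" and "anc_eq u v" "v \<in> N"
  then obtain w where w: "v = u @ w" unfolding anc_eq_def by auto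
  have "\<And>w. u @ w \<in> N \<Longrightarrow> u \<in> N"
  proof -
    fix w show "u @ w \<in> N \<Longrightarrow> u \<in> N"
    proof (induction w rule: rev_induct)
      case Nil then show ?case by simp
    next
      case (snoc x xs) then show ?case using T unfolding TI_def by (metis append_assoc)
    qed
  qed
  then show ?thesis using w \<open>v \<in> N\<close> by blast
qed

lemma TI_step:
  assumes T: "TI \<phi> N lab mk" and lf: "leaf N v" and mv: "mk v = None"
    and r: "if poised (lab v) then out = nonstatic_step lab v else static_step (lab v) out"
  shows "TI \<phi> (fst (apply_outcome N lab mk v out)) (fst (snd (apply_outcome N lab mk v out)))
                   (snd (snd (apply_outcome N lab mk v out)))"
proof -
  have T1: "[] \<in> N" and T2: "lab [] = {\<phi>}" and T3: "finite N"
    and T4: "\<forall>v i. v@[i] \<in> N \<longrightarrow> v \<in> N" and T5: "\<forall>v\<in>N. finite (lab v)"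
    and T6: "\<forall>v\<in>N. (\<exists>i. v@[i] \<in> N) \<longrightarrow> mk v = None \<and> (\<exists>ls. (if poised (lab v) then nonstatic_step lab v = Kids ls else static_step (lab v) (Kids ls)) \<and> (\<forall>i. v@[i]\<in>N \<longleftrightarrow> i<length ls) \<and> (\<forall>i<length ls. lab (v@[i]) = ls!i))"
    and T7: "\<forall>v m. mk v = Some m \<longrightarrow> v \<in> N \<and> (\<forall>i. v@[i]\<notin>N) \<and> (if poised (lab v) then nonstatic_step lab v = Close m else static_step (lab v) (Close m))"
    using T unfolding TI_def by blast+
  have vN: "v \<in> N" and nochild: "\<And>i. v @ [i] \<notin> N" using lf unfolding leaf_def by auto
  show ?thesis
  proof (cases out)
    case (Close m)
    have eq: "apply_outcome N lab mk v out = (N, lab, mk(v := Some m))"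
      unfolding apply_outcome_def Close by simp
    have rr: "if poised (lab v) then nonstatic_step lab v = Close m else static_step (lab v) (Close m)"
      using r Close by (auto split: if_splits)
    have "TI \<phi> N lab (mk(v := Some m))"
      unfolding TI_def
    proof (intro conjI)
      show "[] \<in> N" "lab [] = {\<phi>}" "finite N" "\<forall>v i. v@[i] \<in> N \<longrightarrow> v \<in> N" "\<forall>v\<in>N. finite (lab v)"
        using T1 T2 T3 T4 T5 by auto
      show "\<forall>w\<in>N. (\<exists>i. w @ [i] \<in> N) \<longrightarrow> (mk(v := Some m)) w = None \<and> (\<exists>ls. (if poised (lab w) then nonstatic_step lab w = Kids ls else static_step (lab w) (Kids ls)) \<and> (\<forall>i. w @ [i] \<in> N \<longleftrightarrow> i < length ls) \<and> (\<forall>i<length ls. lab (w @ [i]) = ls ! i))"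
      proof (intro ballI impI)
        fix w assume "w \<in> N" "\<exists>i. w @ [i] \<in> N"
        moreover then have "w \<noteq> v" using nochild by auto
        ultimately show "(mk(v := Some m)) w = None \<and> (\<exists>ls. (if poised (lab w) then nonstatic_step lab w = Kids ls else static_step (lab w) (Kids ls)) \<and> (\<forall>i. w @ [i] \<in> N \<longleftrightarrow> i < length ls) \<and> (\<forall>i<length ls. lab (w @ [i]) = ls ! i))"
          using T6 by simp
      qed
      show "\<forall>w m'. (mk(v := Some m)) w = Some m' \<longrightarrow> w \<in> N \<and> (\<forall>i. w@[i]\<notin>N) \<and> (if poised (lab w) then nonstatic_step lab w = Close m' else static_step (lab w) (Close m'))"
      proof (intro allI impI)
        fix w m' assume h: "(mk(v := Some m)) w = Some m'"
        show "w \<in> N \<and> (\<forall>i. w@[i]\<notin>N) \<and> (if poised (lab w) then nonstatic_step lab w = Close m' else static_step (lab w) (Close m'))"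
        proof (cases "w = v")
          case True then show ?thesis using h vN nochild rr by (auto split: if_splits)
        next
          case False then show ?thesis using h T7 by simp
        qed
      qed
    qed
    then show ?thesis using eq by simp
  next
    case (Kids ls)
    define N' where "N' = N \<union> {v @ [i] | i. i < length ls}"
    define lab' where "lab' = (\<lambda>w. if (\<exists>i<length ls. w = v @ [i]) then ls ! last w else lab w)"
    have eq: "apply_outcome N lab mk v out = (N', lab', mk)"
      unfolding apply_outcome_def N'_def lab'_def Kids by simp
    have agree: "\<And>w. w \<in> N \<Longrightarrow> lab' w = lab w" unfolding lab'_def using nochild by auto
    have agreeP: "\<And>y. y \<in> N \<Longrightarrow> nonstatic_step lab' y = nonstatic_step lab y"
      by (rule nonstatic_local, rule agree, rule prefix_in[OF T], auto)
    have labnew: "\<And>i. i < length ls \<Longrightarrow> lab' (v@[i]) = ls!i" unfolding lab'_def by auto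
    have rr: "if poised (lab v) then nonstatic_step lab v = Kids ls else static_step (lab v) (Kids ls)"
      using r Kids by (auto split: if_splits)
    have kfin: "\<And>i. i < length ls \<Longrightarrow> finite (ls!i)"
    proof -
      fix i assume i: "i < length ls"
      show "finite (ls!i)"
      proof (cases "poised (lab v)")
        case True then have "ls = [transition_label (lab v)]" using rr nonstatic_kids by auto
        then show ?thesis using i T5 vN finite_transition_label by auto
      next
        case False then have "static_step (lab v) (Kids ls)" using rr by simp
        then show ?thesis using static_kids_finite i T5 vN by blast
      qed
    qed
    have newleaf: "\<And>i j. v @ [i] @ [j] \<notin> N'"
    proof -
      fix i j
      have "v @ [i] @ [j] \<notin> N" using T4 nochild by (metis append_assoc)
      moreover have "\<And>k. v @ [i] @ [j] \<noteq> v @ [k]" by simp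
      ultimately show "v @ [i] @ [j] \<notin> N'" unfolding N'_def by blast
    qed
    have "TI \<phi> N' lab' mk"
      unfolding TI_def
    proof (intro conjI)
      show "[] \<in> N'" using T1 unfolding N'_def by blast
      show "lab' [] = {\<phi>}" using T1 T2 agree by simp
      show "finite N'" using T3 unfolding N'_def by simp
      show "\<forall>w i. w @ [i] \<in> N' \<longrightarrow> w \<in> N'"
      proof (intro allI impI)
        fix w i assume "w @ [i] \<in> N'"
        then have "w @ [i] \<in> N \<or> w = v" unfolding N'_def by auto
        then show "w \<in> N'" using T4 vN unfolding N'_def by blast
      qed
      show "\<forall>w\<in>N'. finite (lab' w)"
      proof
        fix w assume "w \<in> N'"
        then have "w \<in> N \<or> (\<exists>i<length ls. w = v @ [i])" unfolding N'_def by blast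
        then show "finite (lab' w)" using T5 agree kfin labnew by auto
      qed
      show "\<forall>w\<in>N'. (\<exists>i. w @ [i] \<in> N') \<longrightarrow> mk w = None \<and> (\<exists>ls. (if poised (lab' w) then nonstatic_step lab' w = Kids ls else static_step (lab' w) (Kids ls)) \<and> (\<forall>i. w @ [i] \<in> N' \<longleftrightarrow> i < length ls) \<and> (\<forall>i<length ls. lab' (w @ [i]) = ls ! i))"
      proof (intro ballI impI)
        fix w assume wN: "w \<in> N'" and ch: "\<exists>i. w @ [i] \<in> N'"
        have wN0: "w \<in> N"
        proof (rule ccontr)
          assume "w \<notin> N"
          then obtain k where "w = v @ [k]" using wN unfolding N'_def by blast
          then show False using ch newleaf by auto
        qed
        show "mk w = None \<and> (\<exists>ls. (if poised (lab' w) then nonstatic_step lab' w = Kids ls else static_step (lab' w) (Kids ls)) \<and> (\<forall>i. w @ [i] \<in> N' \<longleftrightarrow> i < length ls) \<and> (\<forall>i<length ls. lab' (w @ [i]) = ls ! i))"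
        proof (cases "w = v")
          case True
          have "(\<forall>i. w @ [i] \<in> N' \<longleftrightarrow> i < length ls)" using True nochild unfolding N'_def by auto
          moreover have "if poised (lab' w) then nonstatic_step lab' w = Kids ls else static_step (lab' w) (Kids ls)"
            using True rr agree[OF vN] agreeP[OF vN] by simp
          ultimately show ?thesis using True mv labnew by blast
        next
          case False
          have c1: "\<And>i. w @ [i] \<in> N' \<longleftrightarrow> w @ [i] \<in> N" using False unfolding N'_def by auto
          then have "\<exists>i. w @ [i] \<in> N" using ch by auto
          then obtain ls' where m0: "mk w = None" and
            A: "(if poised (lab w) then nonstatic_step lab w = Kids ls' else static_step (lab w) (Kids ls'))"
            and B: "(\<forall>i. w @ [i] \<in> N \<longleftrightarrow> i < length ls')" and C: "(\<forall>i<length ls'. lab (w @ [i]) = ls' ! i)"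
            using T6 wN0 by blast
          have "\<forall>i<length ls'. lab' (w @ [i]) = ls' ! i" using B C agree by auto
          moreover have "if poised (lab' w) then nonstatic_step lab' w = Kids ls' else static_step (lab' w) (Kids ls')"
            using A agree[OF wN0] agreeP[OF wN0] by simp
          moreover have "\<forall>i. w @ [i] \<in> N' \<longleftrightarrow> i < length ls'" using B c1 by blast
          ultimately show ?thesis using m0 by blast
        qed
      qed
      show "\<forall>w m. mk w = Some m \<longrightarrow> w \<in> N' \<and> (\<forall>i. w @ [i] \<notin> N') \<and> (if poised (lab' w) then nonstatic_step lab' w = Close m else static_step (lab' w) (Close m))"
      proof (intro allI impI)
        fix w m assume mw: "mk w = Some m"
        then have wN0: "w \<in> N" and nc: "\<forall>i. w @ [i] \<notin> N"
          and R: "(if poised (lab w) then nonstatic_step lab w = Close m else static_step (lab w) (Close m))"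
          using T7 by blast+
        have "w \<noteq> v" using mw mv by auto
        then have "\<forall>i. w @ [i] \<notin> N'" using nc unfolding N'_def by auto
        moreover have "if poised (lab' w) then nonstatic_step lab' w = Close m else static_step (lab' w) (Close m)"
          using R agree[OF wN0] agreeP[OF wN0] by simp
        ultimately show "w \<in> N' \<and> (\<forall>i. w @ [i] \<notin> N') \<and> (if poised (lab' w) then nonstatic_step lab' w = Close m else static_step (lab' w) (Close m))"
          using wN0 unfolding N'_def by blast
      qed
    qed
    then show ?thesis using eq by simp
  qed
qed

lemma tableau_TI: "tableau \<phi> N lab mk \<Longrightarrow> TI \<phi> N lab mk"
proof (induction rule: tableau.induct)
  case root
  then show ?case unfolding TI_def by auto
next
  case (step N lab mk v out)
  then show ?case using TI_step by blast
qed



definition sats where "sats g \<rho> \<Gamma> \<longleftrightarrow> (\<forall>f\<in>\<Gamma>. sat g \<rho> f)"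

lemma suffix_suffix: "suffix i (suffix j \<sigma>) = suffix (j + i) \<sigma>"
  unfolding suffix_def by (auto simp: add.assoc)

lemma suffix_0: "suffix 0 \<sigma> = \<sigma>" unfolding suffix_def by simp

lemma sat_U_unfold: "sat g \<rho> (Until a b) \<longleftrightarrow> sat g \<rho> b \<or> (sat g \<rho> a \<and> sat g (suffix 1 \<rho>) (Until a b))"
proof
  assume "sat g \<rho> (Until a b)"
  then obtain i where i: "sat g (suffix i \<rho>) b" "\<forall>j<i. sat g (suffix j \<rho>) a" by auto
  show "sat g \<rho> b \<or> (sat g \<rho> a \<and> sat g (suffix 1 \<rho>) (Until a b))"
  proof (cases i)
    case 0 then show ?thesis using i by (simp add: suffix_0)
  next
    case (Suc k)
    have "sat g \<rho> a" using i Suc by (metis suffix_0 zero_less_Suc)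
    moreover have "sat g (suffix 1 \<rho>) (Until a b)"
      using i Suc by (auto simp: suffix_suffix intro!: exI[of _ k])
    ultimately show ?thesis by simp
  qed
next
  assume "sat g \<rho> b \<or> (sat g \<rho> a \<and> sat g (suffix 1 \<rho>) (Until a b))"
  then show "sat g \<rho> (Until a b)"
  proof
    assume "sat g \<rho> b" then show ?thesis by (auto simp: suffix_0 intro!: exI[of _ 0])
  next
    assume h: "sat g \<rho> a \<and> sat g (suffix 1 \<rho>) (Until a b)"
    then obtain i where i: "sat g (suffix (1+i) \<rho>) b" "\<forall>j<i. sat g (suffix (1+j) \<rho>) a"
      by (auto simp: suffix_suffix)
    have "\<forall>j<Suc i. sat g (suffix j \<rho>) a"
    proof (intro allI impI)
      fix j assume "j < Suc i"
      then show "sat g (suffix j \<rho>) a" using h i by (cases j) (auto simp: suffix_0)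
    qed
    then show ?thesis using i by auto
  qed
qed

lemma S1: assumes "static_step \<Gamma> (Kids ls)" "sats g \<rho> \<Gamma>" shows "\<exists>i<length ls. sats g \<rho> (ls!i)"
  using assms(1) unfolding static_step_def
proof (elim disjE exE conjE)
  assume "Top \<in> \<Gamma>" "Kids ls = Kids [\<Gamma> - {Top}]"
  then show ?thesis using assms(2) unfolding sats_def by (auto intro!: exI[of _ 0])
next
  fix a b assume "And a b \<in> \<Gamma>" "Kids ls = Kids [\<Gamma> - {And a b} \<union> {a, b}]"
  then show ?thesis using assms(2) unfolding sats_def by (auto intro!: exI[of _ 0])
next
  fix a b assume h: "Until a b \<in> \<Gamma>" "Kids ls = Kids [\<Gamma> - {Until a b} \<union> {b}, \<Gamma> - {Until a b} \<union> {a, Nxt (Until a b)}]"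
  have "sat g \<rho> (Until a b)" using h assms(2) unfolding sats_def by auto
  then have "sat g \<rho> b \<or> (sat g \<rho> a \<and> sat g (suffix 1 \<rho>) (Until a b))" using sat_U_unfold by metis
  then show ?thesis
  proof
    assume "sat g \<rho> b" then show ?thesis using h assms(2) unfolding sats_def by (auto intro!: exI[of _ 0])
  next
    assume hh: "sat g \<rho> a \<and> sat g (suffix 1 \<rho>) (Until a b)"
    then have hX: "sat g \<rho> (Nxt (Until a b))" by (subst sat.simps(5)) simp
    have c: "sats g \<rho> (\<Gamma> - {Until a b} \<union> {a, Nxt (Until a b)})" using assms(2) hh hX unfolding sats_def by blast
    show ?thesis using h c by (intro exI[of _ 1]) simp
  qed
next
  fix a assume "Neg (Neg a) \<in> \<Gamma>" "Kids ls = Kids [\<Gamma> - {Neg (Neg a)} \<union> {a}]"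
  then show ?thesis using assms(2) unfolding sats_def by (auto intro!: exI[of _ 0])
next
  fix a b assume h: "Neg (And a b) \<in> \<Gamma>" "Kids ls = Kids [\<Gamma> - {Neg (And a b)} \<union> {Neg a}, \<Gamma> - {Neg (And a b)} \<union> {Neg b}]"
  show ?thesis
  proof (cases "sat g \<rho> a")
    case True
    have "sat g \<rho> (Neg (And a b))" using h assms(2) unfolding sats_def by blast
    then have "\<not> sat g \<rho> b" using True by simp
    then show ?thesis using h assms(2) unfolding sats_def by (auto intro!: exI[of _ 1])
  next
    case False then show ?thesis using h assms(2) unfolding sats_def by (auto intro!: exI[of _ 0])
  qed
next
  fix a b assume h: "Neg (Until a b) \<in> \<Gamma>" "Kids ls = Kids [\<Gamma> - {Neg (Until a b)} \<union> {Neg a, Neg b},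
                    \<Gamma> - {Neg (Until a b)} \<union> {Neg b, Nxt (Neg (Until a b))}]"
  have n: "\<not> sat g \<rho> (Until a b)" using h assms(2) unfolding sats_def by auto
  then have nb: "\<not> sat g \<rho> b" using sat_U_unfold by metis
  show ?thesis
  proof (cases "sat g \<rho> a")
    case True
    then have "\<not> sat g (suffix 1 \<rho>) (Until a b)" using n sat_U_unfold by metis
    then show ?thesis using h nb assms(2) unfolding sats_def by (auto intro!: exI[of _ 1])
  next
    case False then show ?thesis using h nb assms(2) unfolding sats_def by (auto intro!: exI[of _ 0])
  qed
qed (auto)

lemma S2: assumes "static_step \<Gamma> (Kids ls)" "Until a b \<in> \<Gamma>" "i < length ls" "Until a b \<notin> ls!i"
  shows "ls = [(\<Gamma> - {Until a b}) \<union> {b}, (\<Gamma> - {Until a b}) \<union> {a, Nxt (Until a b)}]"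
  using assms unfolding static_step_def
  by (auto simp: nth_Cons' less_Suc_eq split: if_splits)

lemma S3: assumes "static_step \<Gamma> (Kids ls)" "Nxt f \<in> \<Gamma>" "i < length ls"
  shows "Nxt f \<in> ls!i"
  using assms unfolding static_step_def
  by (auto simp: nth_Cons' less_Suc_eq split: if_splits)

lemma S4: assumes "static_step \<Gamma> (Close Cross)" shows "\<not> sats g \<rho> \<Gamma>"
  using assms unfolding static_step_def sats_def by (auto, metis sat.simps(3), metis sat.simps(2,3))

lemma poised_noU: "poised \<Gamma> \<Longrightarrow> Until a b \<notin> \<Gamma>"
  unfolding poised_def by fastforce

lemma trans_sound: "sats g \<rho> \<Gamma> \<Longrightarrow> sats g (suffix 1 \<rho>) (transition_label \<Gamma>)"
  unfolding sats_def transition_label_def by auto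



definition jw :: "(nat list \<Rightarrow> 'a ltl set) \<Rightarrow> nat list \<Rightarrow> nat list \<Rightarrow> nat list \<Rightarrow> bool" where
  "jw lab x u v \<longleftrightarrow> anc_eq u v \<and> anc v x \<and> lab u = lab x \<and> lab v = lab x \<and>
     (\<forall>a b. Nxt (Until a b) \<in> lab x \<longrightarrow> (\<exists>y. anc v y \<and> anc_eq y x \<and> b \<in> lab y) \<longrightarrow>
        (\<exists>y. anc u y \<and> anc_eq y v \<and> b \<in> lab y))"

definition pend where "pend lab w x b \<longleftrightarrow> \<not> (\<exists>y. anc w y \<and> anc_eq y x \<and> b \<in> lab y)"

lemma prune_jw: "prune_cond lab x \<Longrightarrow> \<exists>u v. jw lab x u v"
  unfolding prune_cond_def jw_def using anc_imp_eq by metis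

lemma prune0_jw: "prune0_cond lab x \<Longrightarrow> \<exists>u v. jw lab x u v"
  unfolding prune0_cond_def jw_def using anc_eq_refl by metis

lemma P1: "anc_eq a c \<Longrightarrow> anc_eq b c \<Longrightarrow> anc_eq a b \<or> anc_eq b a"
proof -
  assume "anc_eq a c" "anc_eq b c"
  then obtain p q where "a @ p = b @ q" unfolding anc_eq_def by metis
  then obtain us where "a = b @ us \<and> us @ p = q \<or> a @ us = b \<and> p = us @ q"
    unfolding append_eq_append_conv2 by blast
  then show ?thesis unfolding anc_eq_def by blast
qed
lemma P2: "anc_eq a c \<Longrightarrow> anc_eq b c \<Longrightarrow> length a \<le> length b \<Longrightarrow> anc_eq a b"
proof -
  assume h: "anc_eq a c" "anc_eq b c" "length a \<le> length b"
  have "anc_eq a b \<or> anc_eq b a" using P1[OF h(1) h(2)] .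
  moreover have "anc_eq b a \<Longrightarrow> a = b" using h(3) unfolding anc_eq_def by auto
  ultimately show ?thesis unfolding anc_eq_def by auto
qed
lemma P3: "anc_eq a b \<Longrightarrow> \<not> anc_eq b a \<Longrightarrow> anc a b"
  unfolding anc_eq_def anc_def by (metis append.right_neutral)
lemma P4: "anc_eq w u \<Longrightarrow> anc u y \<Longrightarrow> anc w y"
  unfolding anc_eq_def anc_def by (metis append.assoc append_is_Nil_conv)
lemma P5: "anc_eq a b \<Longrightarrow> anc_eq a (b @ [z])"
  unfolding anc_eq_def by (metis append.assoc)
lemma P6: "anc_eq w x \<Longrightarrow> anc w (x @ [z])"
  unfolding anc_eq_def anc_def by (metis append.assoc append_is_Nil_conv not_Cons_self2)
lemma P7: "anc a b \<Longrightarrow> anc_eq b c \<Longrightarrow> anc_eq a c"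
  unfolding anc_eq_def anc_def by (metis append.assoc)
lemma pend_mono: "pend lab w (x @ [z]) b \<Longrightarrow> pend lab w x b"
  unfolding pend_def using P5 by blast

locale ctx =
  fixes \<phi> :: "'a ltl" and N lab mk and g :: "'s \<Rightarrow> 'a set" and \<sigma> :: "nat \<Rightarrow> 's"
  assumes TI: "TI \<phi> N lab mk" and fin: "finished N mk" and nosucc: "\<not> successful N mk"
    and sat\<phi>: "sat g \<sigma> \<phi>"
begin

abbreviation M where "M t \<equiv> suffix t \<sigma>"

lemma T1: "[] \<in> N" and T2: "lab [] = {\<phi>}" and T3: "finite N"
    and T4: "\<And>v i. v@[i] \<in> N \<Longrightarrow> v \<in> N" and T5: "\<And>v. v\<in>N \<Longrightarrow> finite (lab v)"
    and T6: "\<And>v i. v\<in>N \<Longrightarrow> v@[i] \<in> N \<Longrightarrow> mk v = None \<and> (\<exists>ls. (if poised (lab v) then nonstatic_step lab v = Kids ls else static_step (lab v) (Kids ls)) \<and> (\<forall>i. v@[i]\<in>N \<longleftrightarrow> i<length ls) \<and> (\<forall>i<length ls. lab (v@[i]) = ls!i))"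
    and T7: "\<And>v m. mk v = Some m \<Longrightarrow> v \<in> N \<and> (\<forall>i. v@[i]\<notin>N) \<and> (if poised (lab v) then nonstatic_step lab v = Close m else static_step (lab v) (Close m))"
  using TI unfolding TI_def by blast+

lemma inN: "anc_eq u v \<Longrightarrow> v \<in> N \<Longrightarrow> u \<in> N" using prefix_in[OF TI] by blast

definition chosen where "chosen x t = (LEAST i. x@[i] \<in> N \<and> sats g (M t) (lab (x@[i])))"

definition jwp where "jwp x = (SOME p. jw lab x (fst p) (snd p))"

definition nxt where "nxt st = (let x = fst st; t = snd st in
  if (\<exists>i. x@[i] \<in> N) then
    (if poised (lab x) then (x@[0], Suc t) else (x@[chosen x t], t))
  else (snd (jwp x), t))"

definition run where "run n = (nxt ^^ n) ([], 0)"
abbreviation X where "X n \<equiv> fst (run n)"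
abbreviation Tm where "Tm n \<equiv> snd (run n)"
abbreviation isleaf where "isleaf n \<equiv> \<not> (\<exists>i. X n @ [i] \<in> N)"
definition UW where "UW n = fst (jwp (X n))"
definition TG where "TG n = snd (jwp (X n))"

lemma run_Suc: "run (Suc n) = nxt (run n)" unfolding run_def by simp

lemma leaf_analysis:
  assumes xN: "x \<in> N" and s: "sats g \<rho> (lab x)" and lf: "\<not> (\<exists>i. x @ [i] \<in> N)"
  shows "poised (lab x) \<and> \<not> loop_cond lab x \<and> jw lab x (fst (jwp x)) (snd (jwp x))"
proof -
  have "leaf N x" using xN lf unfolding leaf_def by auto
  then obtain m where m: "mk x = Some m" using fin unfolding finished_def by auto
  have "m \<noteq> Tick" using nosucc m \<open>leaf N x\<close> unfolding successful_def by auto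
  then have mc: "m = Cross" by (cases m) auto
  have R: "if poised (lab x) then nonstatic_step lab x = Close Cross else static_step (lab x) (Close Cross)"
    using T7[OF m] mc by (cases "poised (lab x)") auto
  have P: "poised (lab x)"
  proof (rule ccontr)
    assume "\<not> poised (lab x)"
    then have "static_step (lab x) (Close Cross)" using R by simp
    then show False using S4 s by blast
  qed
  then have ns: "nonstatic_step lab x = Close Cross" using R by simp
  then have nl: "\<not> loop_cond lab x" and "prune_cond lab x \<or> prune0_cond lab x"
    unfolding nonstatic_step_def by (auto split: if_splits)
  then have "\<exists>u v. jw lab x u v" using prune_jw prune0_jw by blast
  then have "jw lab x (fst (jwp x)) (snd (jwp x))" unfolding jwp_def
    by (metis (mono_tags, lifting) fst_conv snd_conv someI)
  then show ?thesis using P nl by blast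
qed

lemma basic: "X n \<in> N \<and> sats g (M (Tm n)) (lab (X n))"
proof (induction n)
  case 0
  then show ?case using T1 T2 sat\<phi> by (simp add: run_def sats_def suffix_0)
next
  case (Suc n)
  define x where "x = X n"
  define t where "t = Tm n"
  have xN: "x \<in> N" and sx: "sats g (M t) (lab x)" using Suc x_def t_def by auto
  have rs: "run (Suc n) = nxt (x, t)" using run_Suc x_def t_def by simp
  show ?case
  proof (cases "\<exists>i. x@[i] \<in> N")
    case True
    then obtain i where "x@[i] \<in> N" by blast
    then obtain ls where A: "(if poised (lab x) then nonstatic_step lab x = Kids ls else static_step (lab x) (Kids ls))"
      and B: "\<forall>i. x@[i]\<in>N \<longleftrightarrow> i<length ls" and C: "\<forall>i<length ls. lab (x@[i]) = ls!i"
      using T6[OF xN] by blast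
    show ?thesis
    proof (cases "poised (lab x)")
      case P: True
      then have ls: "ls = [transition_label (lab x)]" using A nonstatic_kids by auto
      have "run (Suc n) = (x@[0], Suc t)" using rs True P unfolding nxt_def by simp
      moreover have "x@[0] \<in> N" "lab (x@[0]) = transition_label (lab x)" using B C ls by auto
      moreover have "sats g (M (Suc t)) (transition_label (lab x))"
        using trans_sound[OF sx] by (simp add: suffix_suffix)
      ultimately show ?thesis by simp
    next
      case P: False
      then have st: "static_step (lab x) (Kids ls)" using A by simp
      obtain j where j: "j < length ls" "sats g (M t) (ls!j)" using S1[OF st sx] by blast
      have ex: "\<exists>i. x@[i] \<in> N \<and> sats g (M t) (lab (x@[i]))" using j B C by auto
      have "run (Suc n) = (x@[chosen x t], t)" using rs True P unfolding nxt_def by simp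
      moreover have "x@[chosen x t] \<in> N \<and> sats g (M t) (lab (x@[chosen x t]))"
        unfolding chosen_def by (rule LeastI_ex[OF ex])
      ultimately show ?thesis by simp
    qed
  next
    case False
    have la: "poised (lab x) \<and> \<not> loop_cond lab x \<and> jw lab x (fst (jwp x)) (snd (jwp x))"
      using leaf_analysis[OF xN sx False] .
    have "run (Suc n) = (snd (jwp x), t)" using rs False unfolding nxt_def by simp
    moreover have "snd (jwp x) \<in> N" using la xN inN anc_imp_eq unfolding jw_def by blast
    moreover have "lab (snd (jwp x)) = lab x" using la unfolding jw_def by blast
    ultimately show ?thesis using sx by simp
  qed
qed

lemma step_poised: assumes "\<not> isleaf n" "poised (lab (X n))"
  shows "X (Suc n) = X n @ [0] \<and> Tm (Suc n) = Suc (Tm n) \<and> lab (X (Suc n)) = transition_label (lab (X n))"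
proof -
  obtain i where i: "X n @ [i] \<in> N" using assms by blast
  obtain ls where A: "(if poised (lab (X n)) then nonstatic_step lab (X n) = Kids ls else static_step (lab (X n)) (Kids ls))"
      and B: "\<forall>i. X n@[i]\<in>N \<longleftrightarrow> i<length ls" and C: "\<forall>i<length ls. lab (X n@[i]) = ls!i"
      using T6[OF _ i] basic by blast
  then have ls: "ls = [transition_label (lab (X n))]" using assms nonstatic_kids by auto
  have "run (Suc n) = (X n @ [0], Suc (Tm n))" using run_Suc[of n] assms unfolding nxt_def
    by (simp add: Let_def)
  then show ?thesis using C ls by simp
qed

lemma step_static: assumes "\<not> isleaf n" "\<not> poised (lab (X n))"
  shows "X (Suc n) = X n @ [chosen (X n) (Tm n)] \<and> Tm (Suc n) = Tm n"
proof -
  have "run (Suc n) = (X n @ [chosen (X n) (Tm n)], Tm n)" using run_Suc[of n] assms unfolding nxt_def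
    by (simp add: Let_def)
  then show ?thesis by simp
qed

lemma step_leaf: assumes "isleaf n"
  shows "X (Suc n) = TG n \<and> Tm (Suc n) = Tm n \<and> poised (lab (X n)) \<and> \<not> loop_cond lab (X n) \<and> jw lab (X n) (UW n) (TG n)"
proof -
  have "run (Suc n) = (TG n, Tm n)" using run_Suc[of n] assms unfolding nxt_def TG_def
    by (simp add: Let_def)
  moreover have "poised (lab (X n)) \<and> \<not> loop_cond lab (X n) \<and> jw lab (X n) (UW n) (TG n)"
    using leaf_analysis[of "X n"] basic[of n] assms unfolding UW_def TG_def by blast
  ultimately show ?thesis by simp
qed

lemma Tm_mono1: "Tm n \<le> Tm (Suc n)"
  using step_poised[of n] step_static[of n] step_leaf[of n] by (cases "isleaf n"; cases "poised (lab (X n))") auto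

lemma Tm_mono: "n \<le> m \<Longrightarrow> Tm n \<le> Tm m"
  using lift_Suc_mono_le[of "\<lambda>n. Tm n", OF Tm_mono1] by blast

lemma len_step: "\<not> isleaf n \<Longrightarrow> length (X (Suc n)) = Suc (length (X n))"
  using step_poised[of n] step_static[of n] by (cases "poised (lab (X n))") auto

lemma inf_leaves: "\<exists>n\<ge>m. isleaf n"
proof (rule ccontr)
  assume "\<not> (\<exists>n\<ge>m. isleaf n)"
  then have nl: "\<And>n. n \<ge> m \<Longrightarrow> \<not> isleaf n" by blast
  have len: "\<And>k. length (X (m + k)) = length (X m) + k"
  proof -
    fix k show "length (X (m + k)) = length (X m) + k"
    proof (induction k)
      case 0 then show ?case by simp
    next
      case (Suc k)
      have "\<not> isleaf (m+k)" by (rule nl) simp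
      then show ?case using Suc len_step[of "m+k"] by simp
    qed
  qed
  obtain L where L: "\<forall>x\<in>N. length x \<le> L"
    using T3 finite_nat_set_iff_bounded_le[of "length ` N"] by auto
  have "length (X (m + Suc L)) \<le> L" using L basic by blast
  then show False using len[of "Suc L"] by simp
qed

lemma TG_nonleaf: assumes "isleaf n" shows "\<not> isleaf (Suc n) \<and> poised (lab (X (Suc n)))"
proof -
  have h: "X (Suc n) = TG n" "poised (lab (X n))" "jw lab (X n) (UW n) (TG n)" using step_leaf[OF assms] by auto
  then obtain w where w: "w \<noteq> []" "X n = TG n @ w" unfolding jw_def anc_def by blast
  then have "anc_eq (TG n @ [hd w]) (X n)" unfolding anc_eq_def by (metis append_Cons append_assoc append_self_conv2 list.exhaust_sel)
  then have "TG n @ [hd w] \<in> N" using inN basic by blast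
  then show ?thesis using h unfolding jw_def by auto
qed

lemma Tm_unbounded: "\<exists>n. B \<le> Tm n"
proof (induction B)
  case 0 then show ?case by simp
next
  case (Suc B)
  then obtain n where n: "B \<le> Tm n" by blast
  obtain n' where n': "n' \<ge> n" "isleaf n'" using inf_leaves by blast
  have "Tm (Suc n') = Tm n'" using step_leaf[OF n'(2)] by simp
  moreover have "Tm (Suc (Suc n')) = Suc (Tm (Suc n'))" using TG_nonleaf[OF n'(2)] step_poised by blast
  moreover have "Tm n \<le> Tm n'" using Tm_mono n' by blast
  ultimately show ?case using n by (metis Suc_le_mono le_trans)
qed

lemma TL: assumes "Nxt (Until a b) \<in> lab w" "x \<in> N" "anc_eq w x" "pend lab w x b"
  shows "Until a b \<in> lab x \<or> Nxt (Until a b) \<in> lab x"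
proof -
  obtain zs where zs: "x = w @ zs" using assms(3) unfolding anc_eq_def by blast
  have "\<And>x. x = w @ zs \<Longrightarrow> x \<in> N \<Longrightarrow> pend lab w x b \<Longrightarrow> Until a b \<in> lab x \<or> Nxt (Until a b) \<in> lab x"
  proof (induction zs rule: rev_induct)
    case Nil then show ?case using assms(1) by simp
  next
    case (snoc z zs)
    define y where "y = w @ zs"
    have xy: "x = y @ [z]" using snoc y_def by simp
    have yN: "y \<in> N" using T4 xy snoc by blast
    have py: "pend lab w y b" using snoc(4) xy unfolding pend_def anc_eq_def by auto
    have bx: "b \<notin> lab x" using snoc(4) snoc(2) unfolding pend_def anc_def anc_eq_def by auto
    have IH: "Until a b \<in> lab y \<or> Nxt (Until a b) \<in> lab y" using snoc(1)[OF y_def yN py] .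
    obtain ls where A: "(if poised (lab y) then nonstatic_step lab y = Kids ls else static_step (lab y) (Kids ls))"
      and B: "\<forall>i. y@[i]\<in>N \<longleftrightarrow> i<length ls" and C: "\<forall>i<length ls. lab (y@[i]) = ls!i"
      using T6[OF yN] snoc(3) xy by blast
    have zl: "z < length ls" using B snoc(3) xy by blast
    show ?case
    proof (cases "poised (lab y)")
      case True
      then have "ls = [transition_label (lab y)]" using A nonstatic_kids by auto
      moreover have "Nxt (Until a b) \<in> lab y" using IH True poised_noU by blast
      ultimately show ?thesis using C zl xy unfolding transition_label_def by auto
    next
      case False
      then have st: "static_step (lab y) (Kids ls)" using A by simp
      show ?thesis
      proof (cases "Nxt (Until a b) \<in> lab y")
        case True then show ?thesis using S3[OF st True zl] C zl xy by simp
      next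
        case False
        then have U: "Until a b \<in> lab y" using IH by blast
        show ?thesis
        proof (cases "Until a b \<in> lab x")
          case True then show ?thesis by simp
        next
          case nU: False
          have "Until a b \<notin> ls!z" using nU C zl xy by simp
          then have ls2: "ls = [(lab y - {Until a b}) \<union> {b}, (lab y - {Until a b}) \<union> {a, Nxt (Until a b)}]"
            using S2[OF st U zl] by blast
          then have "z = 0 \<or> z = 1" using zl by auto
          then show ?thesis using ls2 C zl xy bx by auto
        qed
      qed
    qed
  qed
  then show ?thesis using zs assms by blast
qed


end

context ctx begin
definition INV where "INV w T n \<longleftrightarrow> (\<forall>a b. Nxt (Until a b) \<in> lab w \<longrightarrow> pend lab w (X n) b \<longrightarrow>
   (\<forall>s. T < s \<and> s \<le> Tm n \<longrightarrow> (s = Tm n \<and> Until a b \<in> lab (X n)) \<or> \<not> sat g (M s) b))"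

lemma inv_step:
  assumes aw: "anc_eq w (X n)" and hw: "isleaf n \<Longrightarrow> anc_eq w (UW n)" and IH: "INV w T n"
  shows "INV w T (Suc n)"
  unfolding INV_def
proof (intro allI impI)
  fix a b s
  assume nw: "Nxt (Until a b) \<in> lab w" and pd: "pend lab w (X (Suc n)) b" and s: "T < s \<and> s \<le> Tm (Suc n)"
  define x where "x = X n"
  define t where "t = Tm n"
  have xN: "x \<in> N" and sx: "sats g (M t) (lab x)" using basic x_def t_def by auto
  have IH': "pend lab w x b \<Longrightarrow> T < s \<Longrightarrow> s \<le> t \<Longrightarrow> (s = t \<and> Until a b \<in> lab x) \<or> \<not> sat g (M s) b"
    using IH nw unfolding INV_def x_def t_def by blast
  show "(s = Tm (Suc n) \<and> Until a b \<in> lab (X (Suc n))) \<or> \<not> sat g (M s) b"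
  proof (cases "isleaf n")
    case False
    then obtain i where i: "x @ [i] \<in> N" unfolding x_def by blast
    obtain ls where A: "(if poised (lab x) then nonstatic_step lab x = Kids ls else static_step (lab x) (Kids ls))"
      and B: "\<forall>i. x@[i]\<in>N \<longleftrightarrow> i<length ls" and C: "\<forall>i<length ls. lab (x@[i]) = ls!i"
      using T6[OF xN i] by blast
    show ?thesis
    proof (cases "poised (lab x)")
      case P: True
      have P': "poised (lab (X n))" using P unfolding x_def .
      have st: "X (Suc n) = x @ [0]" "Tm (Suc n) = Suc t" "lab (X (Suc n)) = transition_label (lab x)"
        using step_poised[OF False P'] unfolding x_def t_def by blast+
      have px: "pend lab w x b" using pend_mono[of lab w x 0 b] pd st(1) by simp
      show ?thesis
      proof (cases "s \<le> t")
        case True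
        then show ?thesis using IH'[OF px] s poised_noU[OF P, of a b] by blast
      next
        case False
        then have "s = Suc t" using s st by simp
        moreover have "Nxt (Until a b) \<in> lab x" using TL[OF nw xN _ px] aw poised_noU[OF P, of a b] unfolding x_def by blast
        then have "Until a b \<in> lab (X (Suc n))" using st(3) unfolding transition_label_def by blast
        ultimately show ?thesis using st(2) by simp
      qed
    next
      case P: False
      define c where "c = chosen x t"
      have P': "\<not> poised (lab (X n))" using P unfolding x_def .
      have st: "X (Suc n) = x @ [c]" "Tm (Suc n) = t"
        using step_static[OF False P'] unfolding x_def t_def c_def by blast+
      have px: "pend lab w x b" using pend_mono[of lab w x c b] pd st(1) by simp
      have "anc w (x @ [c])" using P6 aw unfolding x_def by blast
      then have bX: "b \<notin> lab (x @ [c])" using pd anc_eq_refl unfolding st(1) pend_def by blast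
      have cN: "x @ [c] \<in> N" using basic[of "Suc n"] st by simp
      have stt: "static_step (lab x) (Kids ls)" using A P by simp
      have st': "s \<le> t" using s st by simp
      show ?thesis
      proof (cases "s = t \<and> Until a b \<in> lab x")
        case False then show ?thesis using IH'[OF px] s st' by blast
      next
        case True
        show ?thesis
        proof (cases "Until a b \<in> lab (x @ [c])")
          case True then show ?thesis using st \<open>s = t \<and> Until a b \<in> lab x\<close> by simp
        next
          case nU: False
          have cl: "c < length ls" using B cN by blast
          have "Until a b \<notin> ls ! c" using nU C cl by simp
          then have ls2: "ls = [(lab x - {Until a b}) \<union> {b}, (lab x - {Until a b}) \<union> {a, Nxt (Until a b)}]"
            using S2[OF stt _ cl] True by blast
          have "c \<noteq> 0"
          proof
            assume "c = 0"
            then have "lab (x @ [c]) = (lab x - {Until a b}) \<union> {b}" using C ls2 by simp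
            then show False using bX by simp
          qed
          then have "\<not> (x @ [0] \<in> N \<and> sats g (M t) (lab (x @ [0])))"
            unfolding c_def chosen_def using not_less_Least by blast
          moreover have "x @ [0] \<in> N" using B ls2 by simp
          ultimately have "\<not> sats g (M t) ((lab x - {Until a b}) \<union> {b})" using C ls2 by simp
          then have "\<not> sat g (M t) b" using sx unfolding sats_def by blast
          then show ?thesis using True by blast
        qed
      qed
    qed
  next
    case L: True
    have st: "X (Suc n) = TG n" "Tm (Suc n) = t" "poised (lab x)" "jw lab x (UW n) (TG n)"
      using step_leaf[OF L] unfolding x_def t_def by auto
    define u where "u = UW n"
    define v where "v = TG n"
    have J: "anc_eq u v" "anc v x" "lab u = lab x" "lab v = lab x"
      "\<forall>a b. Nxt (Until a b) \<in> lab x \<longrightarrow> (\<exists>y. anc v y \<and> anc_eq y x \<and> b \<in> lab y) \<longrightarrow>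
        (\<exists>y. anc u y \<and> anc_eq y v \<and> b \<in> lab y)" using st(4) unfolding jw_def u_def v_def by auto
    have wu: "anc_eq w u" using hw L u_def by simp
    have pv: "pend lab w v b" using pd st v_def by simp
    have vN: "v \<in> N" using basic[of "Suc n"] st v_def by simp
    have px: "pend lab w x b"
    proof (rule ccontr)
      assume "\<not> pend lab w x b"
      then obtain y where y: "anc w y" "anc_eq y x" "b \<in> lab y" unfolding pend_def by blast
      have "\<not> anc_eq y v" using pv y unfolding pend_def by blast
      then have avy: "anc v y" using P1[OF y(2) anc_imp_eq[OF J(2)]] P3 by blast
      have wv: "anc_eq w v" using wu J(1) unfolding anc_eq_def by auto
      have "Until a b \<in> lab v \<or> Nxt (Until a b) \<in> lab v" using TL[OF nw vN wv pv] .
      then have "Nxt (Until a b) \<in> lab x" using poised_noU[OF st(3)] J(4) by auto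
      then obtain y' where "anc u y'" "anc_eq y' v" "b \<in> lab y'" using J(5) avy y by blast
      then show False using pv wu P4 unfolding pend_def by blast
    qed
    show ?thesis using IH'[OF px] s st J(4) v_def by simp
  qed
qed

end

context ctx begin

lemma UW_anc: "isleaf n \<Longrightarrow> anc_eq (UW n) (X n) \<and> anc (TG n) (X n) \<and> anc_eq (UW n) (TG n)"
  using step_leaf[of n] unfolding jw_def by (meson anc_eq_trans anc_imp_eq)

lemma contra: False
proof -
  define J where "J = {n. isleaf n}"
  have infJ: "infinite J" using inf_leaves unfolding J_def infinite_nat_iff_unbounded_le by blast
  have UWN: "\<And>n. n\<in>J \<Longrightarrow> UW n \<in> N" using UW_anc basic inN unfolding J_def by blast
  have finUW: "finite (UW ` J)" using UWN by (intro finite_subset[OF _ T3]) blast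
  obtain a0 where "a0 \<in> J" "infinite {a\<in>J. UW a = UW a0}" using pigeonhole_infinite[OF infJ finUW] by blast
  define good where "good z \<longleftrightarrow> infinite {n\<in>J. UW n = z}" for z
  have "good (UW a0)" unfolding good_def using \<open>infinite {a\<in>J. UW a = UW a0}\<close> by simp
  then obtain w where gw0: "good w \<and> (\<forall>z. good z \<longrightarrow> length w \<le> length z)"
    using ex_has_least_nat[of good "UW a0" length] by blast
  then have gw: "good w" and wmin: "\<And>z. good z \<Longrightarrow> length w \<le> length z" by blast+
  define B where "B = {n\<in>J. length (UW n) < length w}"
  have Bsub: "B \<subseteq> (\<Union>z\<in>{z\<in>N. length z < length w}. {n\<in>J. UW n = z})" using UWN unfolding B_def by blast
  have "finite (\<Union>z\<in>{z\<in>N. length z < length w}. {n\<in>J. UW n = z})"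
  proof (rule finite_UN_I)
    show "finite {z\<in>N. length z < length w}" using T3 by simp
    fix z assume "z \<in> {z\<in>N. length z < length w}"
    then have lz: "length z < length w" by simp
    have "\<not> good z"
    proof
      assume "good z" then have "length w \<le> length z" by (rule wmin)
      then show False using lz by simp
    qed
    then show "finite {n\<in>J. UW n = z}" unfolding good_def by simp
  qed
  then have "finite B" using Bsub finite_subset by blast
  then have "\<exists>m. \<forall>n\<in>B. n < m" unfolding finite_nat_set_iff_bounded .
  then obtain K where K: "\<And>n. n \<in> B \<Longrightarrow> n < K" by blast
  have KK: "length w \<le> length (UW n)" if "n\<in>J" "n \<ge> K" for n
  proof (rule ccontr)
    assume "\<not> length w \<le> length (UW n)"
    then have "n \<in> B" unfolding B_def using that by simp
    then show False using K[of n] that by simp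
  qed
  have "\<exists>n\<ge>K. n \<in> {n\<in>J. UW n = w}" using gw unfolding good_def infinite_nat_iff_unbounded_le by (rule spec)
  then obtain n0 where n0: "n0 \<in> J" "UW n0 = w" "n0 \<ge> K" by blast
  have path: "\<And>k. anc_eq w (X (Suc n0 + k))"
  proof -
    fix k show "anc_eq w (X (Suc n0 + k))"
    proof (induction k)
      case 0
      have "X (Suc n0) = TG n0" using step_leaf n0(1) unfolding J_def by auto
      then show ?case using UW_anc[of n0] n0 unfolding J_def by simp
    next
      case (Suc k)
      define n where "n = Suc n0 + k"
      show ?case
      proof (cases "isleaf n")
        case False
        then obtain z where "X (Suc n) = X n @ [z]"
          using step_poised[OF False] step_static[OF False] by (cases "poised (lab (X n))") auto
        then show ?thesis using Suc P5 n_def by simp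
      next
        case True
        have "length w \<le> length (UW n)" using KK[of n] True n0 unfolding J_def n_def by simp
        then have "anc_eq w (UW n)" using P2 UW_anc[OF True] Suc n_def by blast
        then have "anc_eq w (TG n)" using UW_anc[OF True] anc_eq_trans by blast
        then show ?thesis using step_leaf[OF True] n_def by simp
      qed
    qed
  qed
  have hw: "\<And>k. isleaf (Suc n0 + k) \<Longrightarrow> anc_eq w (UW (Suc n0 + k))"
  proof -
    fix k assume L: "isleaf (Suc n0 + k)"
    have "length w \<le> length (UW (Suc n0 + k))" using KK[of "Suc n0 + k"] L n0 unfolding J_def by simp
    then show "anc_eq w (UW (Suc n0 + k))" using P2 UW_anc[OF L] path by blast
  qed
  define T where "T = Tm (Suc n0)"
  have inv: "\<And>k. INV w T (Suc n0 + k)"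
  proof -
    fix k show "INV w T (Suc n0 + k)"
    proof (induction k)
      case 0 then show ?case unfolding INV_def T_def by auto
    next
      case (Suc k)
      then show ?case using inv_step[OF path hw] by simp
    qed
  qed
  define S where "S = {n\<in>J. n > n0 \<and> UW n = w}"
  have "S = {n\<in>J. UW n = w} - {..n0}" unfolding S_def by auto
  then have infS: "infinite S" using gw unfolding good_def by simp
  have Sev: "\<And>n. n \<in> S \<Longrightarrow> \<exists>p. Nxt (Until (fst p) (snd p)) \<in> lab w \<and> pend lab w (X n) (snd p)"
  proof -
    fix n assume nS: "n \<in> S"
    then have L: "isleaf n" and uw: "UW n = w" unfolding S_def J_def by auto
    have st: "poised (lab (X n))" "\<not> loop_cond lab (X n)" "jw lab (X n) w (TG n)"
      using step_leaf[OF L] uw by auto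
    have lw: "lab w = lab (X n)" using st(3) unfolding jw_def by blast
    have awx: "anc w (X n)" using st(3) P4 unfolding jw_def by blast
    have "\<not> (anc w (X n) \<and> poised (lab w) \<and> lab (X n) \<subseteq> lab w \<and> (\<forall>a b. Nxt (Until a b) \<in> lab w \<longrightarrow> (\<exists>y. anc w y \<and> anc_eq y (X n) \<and> b \<in> lab y)))"
      using st(2) unfolding loop_cond_def by blast
    then have "\<not> (\<forall>a b. Nxt (Until a b) \<in> lab w \<longrightarrow> (\<exists>y. anc w y \<and> anc_eq y (X n) \<and> b \<in> lab y))"
      using awx st(1) lw by simp
    then show "\<exists>p. Nxt (Until (fst p) (snd p)) \<in> lab w \<and> pend lab w (X n) (snd p)"
      unfolding pend_def by auto
  qed
  define e where "e n = (SOME p. Nxt (Until (fst p) (snd p)) \<in> lab w \<and> pend lab w (X n) (snd p))" for n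
  have eS: "\<And>n. n \<in> S \<Longrightarrow> Nxt (Until (fst (e n)) (snd (e n))) \<in> lab w \<and> pend lab w (X n) (snd (e n))"
    unfolding e_def using Sev by (rule someI_ex)
  have wN: "w \<in> N" using UWN n0 by blast
  define f where "f \<psi> = (case \<psi> of Nxt (Until a b) \<Rightarrow> (a, b) | _ \<Rightarrow> (Top, Top))" for \<psi> :: "'a ltl"
  have "e ` S \<subseteq> f ` lab w"
  proof
    fix p assume "p \<in> e ` S"
    then obtain n where "n \<in> S" "p = e n" by blast
    then have "Nxt (Until (fst p) (snd p)) \<in> lab w" using eS by blast
    moreover have "f (Nxt (Until (fst p) (snd p))) = p" unfolding f_def by simp
    ultimately show "p \<in> f ` lab w" by (metis imageI)
  qed
  then have "finite (e ` S)" using T5[OF wN] finite_subset by blast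
  then obtain n1 where n1: "n1 \<in> S" "infinite {n\<in>S. e n = e n1}" using pigeonhole_infinite[OF infS] by blast
  define a where "a = fst (e n1)"
  define b where "b = snd (e n1)"
  have nwab: "Nxt (Until a b) \<in> lab w" using eS[OF n1(1)] a_def b_def by simp
  have lw1: "lab (X n1) = lab w"
    using step_leaf[of n1] n1(1) unfolding S_def J_def jw_def by auto
  have "sats g (M (Tm n1)) (lab w)" using basic[of n1] lw1 by simp
  then have "sat g (M (Tm n1)) (Nxt (Until a b))" using nwab unfolding sats_def by blast
  then have "sat g (suffix 1 (M (Tm n1))) (Until a b)" by (simp only: sat.simps(5))
  then obtain i where i: "sat g (suffix i (suffix 1 (M (Tm n1)))) b" unfolding sat.simps(6) by blast
  define k where "k = Tm n1 + 1 + i"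
  have "suffix i (suffix 1 (M (Tm n1))) = M k" unfolding k_def suffix_suffix by (simp add: add.assoc)
  then have sk: "sat g (M k) b" using i by simp
  obtain m where m: "k \<le> Tm m" using Tm_unbounded by blast
  obtain n' where n': "n' \<in> {n\<in>S. e n = e n1}" "n' \<ge> m"
    using n1(2) unfolding infinite_nat_iff_unbounded_le by blast
  have n'S: "n' \<in> S" and en': "e n' = e n1" using n' by auto
  have pn': "pend lab w (X n') b" using eS[OF n'S] en' b_def by simp
  have "n' > n0" using n'S unfolding S_def by simp
  then obtain k' where k': "n' = Suc n0 + k'" using less_iff_Suc_add by auto
  have I: "INV w T n'" using inv k' by simp
  have "n1 > n0" using n1 unfolding S_def by simp
  then have "T \<le> Tm n1" unfolding T_def using Tm_mono by simp
  then have Tk: "T < k" unfolding k_def by simp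
  have kn': "k \<le> Tm n'" using m n' Tm_mono le_trans by blast
  have pz: "poised (lab (X n'))" using step_leaf[of n'] n'S unfolding S_def J_def by auto
  have "(k = Tm n' \<and> Until a b \<in> lab (X n')) \<or> \<not> sat g (M k) b"
    using I nwab pn' Tk kn' unfolding INV_def by blast
  then show False using sk pz poised_noU by blast
qed

end

theorem mainTheorem1:
  fixes \<phi> :: "'a::countable ltl"
  assumes "satisfiable \<phi>"
    and "tableau \<phi> N lab mk"
    and "finished N mk"
  shows "successful N mk"
proof (rule ccontr)
  assume ns: "\<not> successful N mk"
  from assms(1) obtain S R g \<sigma> where s: "sat (g :: nat \<Rightarrow> 'a set) (\<sigma> :: nat \<Rightarrow> nat) \<phi>"
    unfolding satisfiable_def by blast
  have T: "TI \<phi> N lab mk" using tableau_TI assms(2) .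
  interpret ctx \<phi> N lab mk g \<sigma> using T assms(3) ns s by unfold_locales
  show False by (rule contra)
qed

end
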